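(* Let $A\in\mathbb{R}_+^{n\times n}$ be a nonzero circulant matrix and $M=(A/\lambda(A))^{n^2}$ (max-algebraic power). Then $M$ is a Kleene star: $M\otimes M=M$ and $M_{i,i}=1$ for all $i$, equivalently $M=M^*:=I\oplus M\oplus M^2\oplus\dots\oplus M^{n-1}$.
   Context: Max algebra on $\mathbb{R}_+$ with $\oplus=\max$ and ordinary product; $A^t$ is the max-algebraic power and $I$ the identity matrix. A circulant matrix has $A_{i,j}=a_t$ with $t\equiv j-i\pmod n$, $t\in\{0,\dots,n-1\}$. $\lambda(A)$ is the greatest max-algebraic eigenvalue, i.e. the maximum cycle geometric mean; it is nonzero for nonzero circulant $A$. *)

theory Defs
  imports Complex_Main
begin

text \<open>Square matrices of size n over R_+ are represented as functions
  nat => nat => real, only the entries with indices < n being relevant.\<close>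

definition mp_mult :: "nat \<Rightarrow> (nat \<Rightarrow> nat \<Rightarrow> real) \<Rightarrow> (nat \<Rightarrow> nat \<Rightarrow> real) \<Rightarrow> (nat \<Rightarrow> nat \<Rightarrow> real)" where
  "mp_mult n A B = (\<lambda>i j. Max ((\<lambda>k. A i k * B k j) ` {..<n}))"

definition mp_id :: "nat \<Rightarrow> nat \<Rightarrow> real" where
  "mp_id = (\<lambda>i j. if i = j then 1 else 0)"

fun mp_pow :: "nat \<Rightarrow> (nat \<Rightarrow> nat \<Rightarrow> real) \<Rightarrow> nat \<Rightarrow> (nat \<Rightarrow> nat \<Rightarrow> real)" where
  "mp_pow n A 0 = mp_id"
| "mp_pow n A (Suc t) = mp_mult n A (mp_pow n A t)"

definition mp_star :: "nat \<Rightarrow> (nat \<Rightarrow> nat \<Rightarrow> real) \<Rightarrow> (nat \<Rightarrow> nat \<Rightarrow> real)" where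
  "mp_star n M = (\<lambda>i j. Max ((\<lambda>t. mp_pow n M t i j) ` {..<n}))"

definition nonneg_mat :: "nat \<Rightarrow> (nat \<Rightarrow> nat \<Rightarrow> real) \<Rightarrow> bool" where
  "nonneg_mat n A \<longleftrightarrow> (\<forall>i<n. \<forall>j<n. 0 \<le> A i j)"

definition circulant :: "nat \<Rightarrow> (nat \<Rightarrow> nat \<Rightarrow> real) \<Rightarrow> bool" where
  "circulant n A \<longleftrightarrow> (\<exists>a :: nat \<Rightarrow> real. \<forall>i<n. \<forall>j<n. A i j = a ((j + n - i) mod n))"

text \<open>Maximum cycle geometric mean: cycles are given by index lists
  xs = [i_0,...,i_(k-1)] with 1 <= k <= n, the cycle being
  i_0 -> i_1 -> ... -> i_(k-1) -> i_0.\<close>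
definition cycle_weight :: "(nat \<Rightarrow> nat \<Rightarrow> real) \<Rightarrow> nat list \<Rightarrow> real" where
  "cycle_weight A xs = (\<Prod>l<length xs. A (xs ! l) (xs ! ((l + 1) mod length xs)))"

definition mcgm :: "nat \<Rightarrow> (nat \<Rightarrow> nat \<Rightarrow> real) \<Rightarrow> real" where
  "mcgm n A = Max {root (length xs) (cycle_weight A xs) | xs.
       xs \<noteq> [] \<and> length xs \<le> n \<and> set xs \<subseteq> {..<n}}"

end

theory Submission
  imports Defs
begin


lemma circ_idx:
  fixes n x y s :: nat
  assumes "x < n" "s < n" "y mod n = (x + s) mod n"
  shows "(y + n - x) mod n = s"
proof -
  have "((y + n - x) + x) mod n = (s + x) mod n"
    using assms by (simp add: add.commute)
  then have "(y + n - x) mod n = s mod n"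
    by (simp add: nat_mod_eq_iff)
  then show ?thesis using assms by simp
qed

definition wprod :: "(nat \<Rightarrow> real) \<Rightarrow> nat list \<Rightarrow> real" where
  "wprod b ts = prod_list (map b ts)"

definition valid :: "nat \<Rightarrow> nat \<Rightarrow> nat \<Rightarrow> nat \<Rightarrow> nat list \<Rightarrow> bool" where
  "valid n t i j ts \<longleftrightarrow> length ts = t \<and> set ts \<subseteq> {..<n} \<and> (i + sum_list ts) mod n = j"

lemma wprod_bounds:
  assumes "\<forall>t<n. 0 \<le> b t \<and> b t \<le> 1" "set ts \<subseteq> {..<n}"
  shows "0 \<le> wprod b ts \<and> wprod b ts \<le> 1"
  using assms(2)
proof (induction ts)
  case Nil then show ?case by (simp add: wprod_def)
next
  case (Cons u ts)
  then have "0 \<le> b u" "b u \<le> 1" using assms(1) by auto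
  with Cons show ?case by (auto simp: wprod_def intro: mult_le_one)
qed

lemma pow_nonneg:
  assumes "0 < n" "\<forall>i<n. \<forall>k<n. 0 \<le> B i k"
  shows "i < n \<Longrightarrow> j < n \<Longrightarrow> 0 \<le> mp_pow n B t i j"
proof (induction t arbitrary: i j)
  case 0 then show ?case by (simp add: mp_id_def)
next
  case (Suc t)
  have "0 \<le> B i 0 * mp_pow n B t 0 j" using Suc assms by simp
  also have "\<dots> \<le> mp_pow n B (Suc t) i j"
    unfolding mp_pow.simps mp_mult_def using assms(1) by (intro Max_ge) auto
  finally show ?case .
qed

lemma pow_lower:
  assumes n0: "0 < n" and hB: "\<forall>i<n. \<forall>k<n. B i k = b ((k + n - i) mod n)"
    and bnn: "\<forall>t<n. 0 \<le> b t"
  shows "i < n \<Longrightarrow> valid n t i j ts \<Longrightarrow> wprod b ts \<le> mp_pow n B t i j"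
proof (induction ts arbitrary: t i)
  case Nil then show ?case by (auto simp: valid_def wprod_def mp_id_def)
next
  case (Cons u ts)
  then obtain t' where t: "t = Suc t'" by (auto simp: valid_def)
  define k where "k = (i + u) mod n"
  have k: "k < n" using n0 by (simp add: k_def)
  have u: "u < n" using Cons by (auto simp: valid_def)
  have v: "valid n t' k j ts" using Cons.prems t
    by (auto simp: valid_def k_def mod_add_left_eq add.assoc)
  have IH: "wprod b ts \<le> mp_pow n B t' k j" using Cons.IH[OF k v] .
  have Bik: "B i k = b u" using hB Cons.prems(1) k circ_idx[of i n u k] u
    by (simp add: k_def)
  have "wprod b (u # ts) = b u * wprod b ts" by (simp add: wprod_def)
  also have "\<dots> \<le> B i k * mp_pow n B t' k j"
    using IH Bik bnn u by (simp add: mult_left_mono)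
  also have "\<dots> \<le> mp_pow n B t i j"
    unfolding t mp_pow.simps mp_mult_def using k by (intro Max_ge) auto
  finally show ?case .
qed

lemma pow_upper:
  assumes n0: "0 < n" and hB: "\<forall>i<n. \<forall>k<n. B i k = b ((k + n - i) mod n)"
  shows "i < n \<Longrightarrow> j < n \<Longrightarrow> mp_pow n B t i j = 0 \<or> (\<exists>ts. valid n t i j ts \<and> mp_pow n B t i j = wprod b ts)"
proof (induction t arbitrary: i j)
  case 0
  show ?case
  proof (cases "i = j")
    case True
    then have "valid n 0 i j []" using 0 by (simp add: valid_def)
    then show ?thesis using True by (auto simp: mp_id_def wprod_def)
  qed (simp add: mp_id_def)
next
  case (Suc t)
  have "mp_pow n B (Suc t) i j \<in> (\<lambda>k. B i k * mp_pow n B t k j) ` {..<n}"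
    unfolding mp_pow.simps mp_mult_def using n0 by (intro Max_in) auto
  then obtain k where k: "k < n" and eq: "mp_pow n B (Suc t) i j = B i k * mp_pow n B t k j"
    by auto
  from Suc.IH[OF k Suc.prems(2)] show ?case
  proof
    assume "mp_pow n B t k j = 0" then show ?case using eq by simp
  next
    assume "\<exists>ts. valid n t k j ts \<and> mp_pow n B t k j = wprod b ts"
    then obtain ts where ts: "valid n t k j ts" "mp_pow n B t k j = wprod b ts" by blast
    define u where "u = (k + n - i) mod n"
    have u: "u < n" using n0 by (simp add: u_def)
    have iu: "(i + u) mod n = k"
    proof -
      have "(i + u) mod n = (i + (k + n - i)) mod n" by (simp add: u_def mod_add_right_eq)
      also have "\<dots> = (k + n) mod n" using Suc.prems(1) by simp
      finally show ?thesis using k by simp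
    qed
    have "valid n (Suc t) i j (u # ts)" using ts(1) u iu
      by (auto simp: valid_def) (metis add.assoc mod_add_left_eq)
    moreover have "mp_pow n B (Suc t) i j = wprod b (u # ts)"
      using eq ts(2) hB Suc.prems(1) k by (simp add: wprod_def u_def)
    ultimately show ?case by blast
  qed
qed


lemma modcancel: "((x::nat) + a) mod n = (y + a) mod n \<Longrightarrow> x mod n = y mod n"
  by (simp add: nat_mod_eq_iff)

lemma wprod_append: "wprod b (xs @ ys) = wprod b xs * wprod b ys"
  by (simp add: wprod_def)

lemma reduce:
  assumes n0: "0 < n" and bb: "\<forall>t<n. 0 \<le> b t \<and> b t \<le> 1"
  shows "set xs \<subseteq> {..<n} \<Longrightarrow> \<exists>ys. set ys \<subseteq> {..<n} \<and> length ys < n^2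
     \<and> length ys mod n = length xs mod n \<and> sum_list ys mod n = sum_list xs mod n
     \<and> wprod b xs \<le> wprod b ys"
proof (induction "length xs" arbitrary: xs rule: less_induct)
  case less
  show ?case
  proof (cases "length xs < n^2")
    case True then show ?thesis using less.prems by blast
  next
    case False
    define f where "f k = (sum_list (take k xs) mod n, k mod n)" for k
    have img: "f ` {0..n^2} \<subseteq> {..<n} \<times> {..<n}" using n0 by (auto simp: f_def)
    have "card (f ` {0..n^2}) \<le> card ({..<n} \<times> {..<n})"
      by (rule card_mono[OF _ img]) simp
    also have "\<dots> = n^2" by (simp add: power2_eq_square)
    also have "\<dots> < card {0..n^2}" by simp
    finally have "\<not> inj_on f {0..n^2}" using pigeonhole by blast
    then obtain k1 k2 where kk: "k1 < k2" "k2 \<le> n^2" "f k1 = f k2"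
      unfolding inj_on_def by (metis atLeastAtMost_iff linorder_neqE_nat)
    have k2l: "k2 \<le> length xs" using kk False by simp
    define mid where "mid = take (k2 - k1) (drop k1 xs)"
    define xs' where "xs' = take k1 xs @ drop k2 xs"
    have t2: "take k2 xs = take k1 xs @ mid"
      using kk unfolding mid_def by (metis le_add_diff_inverse less_imp_le_nat take_add)
    have xs: "xs = take k1 xs @ mid @ drop k2 xs"
      using append_take_drop_id[of k2 xs] unfolding t2 by simp
    have lmid: "length mid = k2 - k1" using kk k2l by (simp add: mid_def)
    have smid: "sum_list mid mod n = 0"
    proof -
      have "(sum_list mid + sum_list (take k1 xs)) mod n = (0 + sum_list (take k1 xs)) mod n"
        using kk(3) t2 by (simp add: f_def add.commute)
      from modcancel[OF this] show ?thesis by simp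
    qed
    have lmidm: "length mid mod n = 0"
    proof -
      have "((k2 - k1) + k1) mod n = (0 + k1) mod n" using kk by (simp add: f_def)
      from modcancel[OF this] show ?thesis using lmid by simp
    qed
    have lenx: "length xs = length xs' + length mid"
      using k2l lmid kk unfolding xs'_def by simp
    have "length xs' < length xs" using lenx lmid kk by simp
    moreover have sx': "set xs' \<subseteq> {..<n}"
      using less.prems set_take_subset[of k1 xs] set_drop_subset[of k2 xs] unfolding xs'_def by auto
    ultimately obtain ys where ys: "set ys \<subseteq> {..<n}" "length ys < n^2"
      "length ys mod n = length xs' mod n" "sum_list ys mod n = sum_list xs' mod n"
      "wprod b xs' \<le> wprod b ys" using less.hyps by blast
    have "length xs mod n = length xs' mod n"
      using lenx lmidm by (simp add: mod_add_right_eq[symmetric])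
    moreover have "sum_list xs mod n = sum_list xs' mod n"
    proof -
      have "sum_list xs = sum_list xs' + sum_list mid"
        using arg_cong[OF xs, of sum_list] by (simp add: xs'_def)
      then show ?thesis using smid by (simp add: mod_add_right_eq[symmetric])
    qed
    moreover have "wprod b xs \<le> wprod b xs'"
    proof -
      have sm: "set mid \<subseteq> {..<n}"
        using less.prems set_take_subset[of "k2-k1" "drop k1 xs"] set_drop_subset[of k1 xs]
        unfolding mid_def by auto
      have wm: "wprod b mid \<le> 1" using wprod_bounds[OF bb sm] by simp
      have w': "0 \<le> wprod b xs'" using wprod_bounds[OF bb sx'] by simp
      have "wprod b xs = wprod b xs' * wprod b mid"
        using arg_cong[OF xs, of "wprod b"] by (simp add: xs'_def wprod_append)
      also have "\<dots> \<le> wprod b xs' * 1" using wm w' by (intro mult_left_mono)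
      finally show ?thesis by simp
    qed
    ultimately show ?thesis using ys by auto
  qed
qed

lemma reduceN:
  assumes n0: "0 < n" and bb: "\<forall>t<n. 0 \<le> b t \<and> b t \<le> 1" and s: "s < n" "b s = 1"
    and xs: "set xs \<subseteq> {..<n}" "length xs mod n = 0"
  shows "\<exists>ys. set ys \<subseteq> {..<n} \<and> length ys = n^2
     \<and> sum_list ys mod n = sum_list xs mod n \<and> wprod b xs \<le> wprod b ys"
proof -
  obtain ys0 where ys0: "set ys0 \<subseteq> {..<n}" "length ys0 < n^2"
     "length ys0 mod n = length xs mod n" "sum_list ys0 mod n = sum_list xs mod n"
     "wprod b xs \<le> wprod b ys0" using reduce[OF n0 bb xs(1)] by blast
  define m where "m = n^2 - length ys0"
  define ys where "ys = ys0 @ replicate m s"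
  have "n dvd m" unfolding m_def using ys0(3) xs(2)
    by (intro dvd_diff_nat) (simp_all add: power2_eq_square mod_eq_0_iff_dvd)
  then have "sum_list ys mod n = sum_list ys0 mod n"
    by (auto simp: ys_def sum_list_replicate mult.assoc elim!: dvdE)
  moreover have "wprod b ys = wprod b ys0"
    by (simp add: ys_def wprod_def s(2))
  moreover have "length ys = n^2" using ys0(2) by (simp add: ys_def m_def)
  moreover have "set ys \<subseteq> {..<n}" using ys0(1) s by (auto simp: ys_def)
  ultimately show ?thesis using ys0(4,5) by (intro exI[of _ ys]) simp
qed



lemma lam:
  fixes n :: nat and A :: "nat \<Rightarrow> nat \<Rightarrow> real" and c :: "nat \<Rightarrow> real"
  assumes n0: "0 < n" and nn: "\<forall>t<n. 0 \<le> c t"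
    and Ac: "\<forall>x<n. \<forall>y<n. A x y = c ((y + n - x) mod n)"
  shows "mcgm n A = Max (c ` {..<n})"
proof -
  define S where "S = {root (length xs) (cycle_weight A xs) | xs.
       xs \<noteq> [] \<and> length xs \<le> n \<and> set xs \<subseteq> {..<n}}"
  define amax where "amax = Max (c ` {..<n})"
  have cle: "c t \<le> amax" if "t < n" for t using that unfolding amax_def by (intro Max_ge) auto
  have amax0: "0 \<le> amax" using cle[OF n0] nn n0 by force
  have fin: "finite S"
  proof -
    have "S \<subseteq> (\<lambda>xs. root (length xs) (cycle_weight A xs)) ` {xs. set xs \<subseteq> {..<n} \<and> length xs \<le> n}"
      unfolding S_def by auto
    moreover have "finite {xs. set xs \<subseteq> {..<n} \<and> length xs \<le> n}"
      by (rule finite_lists_length_le) simp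
    ultimately show ?thesis by (meson finite_imageI finite_subset)
  qed
  have inS: "c s \<in> S" if s: "s < n" for s
  proof -
    define xs where "xs = map (\<lambda>l. (l * s) mod n) [0..<n]"
    have len: "length xs = n" by (simp add: xs_def)
    have "cycle_weight A xs = (\<Prod>l<n. c s)"
      unfolding cycle_weight_def len
    proof (rule prod.cong[OF refl])
      fix l assume l: "l \<in> {..<n}"
      have x: "xs ! l = (l * s) mod n" using l by (simp add: xs_def)
      have y: "xs ! ((l + 1) mod n) = (((l + 1) mod n) * s) mod n"
        using n0 by (simp add: xs_def)
      have "(((l + 1) mod n) * s) mod n mod n = ((l * s) mod n + s) mod n"
        by (simp add: add.commute mod_add_right_eq mod_mult_left_eq)
      then have "((((l + 1) mod n) * s) mod n + n - (l * s) mod n) mod n = s"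
        using n0 s by (intro circ_idx) auto
      then show "A (xs ! l) (xs ! ((l + 1) mod n)) = c s"
        unfolding x y using Ac n0 by simp
    qed
    then have "cycle_weight A xs = c s ^ n" by simp
    then have "root (length xs) (cycle_weight A xs) = c s"
      using len real_root_power_cancel[OF n0] nn s by simp
    moreover have "xs \<noteq> [] \<and> length xs \<le> n \<and> set xs \<subseteq> {..<n}"
      using len n0 by (auto simp: xs_def)
    ultimately show ?thesis unfolding S_def by (metis (mono_tags, lifting) mem_Collect_eq)
  qed
  have Sle: "v \<le> amax" if "v \<in> S" for v
  proof -
    from that obtain xs where xs: "v = root (length xs) (cycle_weight A xs)" "xs \<noteq> []"
      "set xs \<subseteq> {..<n}" unfolding S_def by blast
    have inn: "xs ! l < n" if "l < length xs" for l using xs(3) that nth_mem by blast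
    have "cycle_weight A xs \<le> (\<Prod>l<length xs. amax)"
      unfolding cycle_weight_def
    proof (rule prod_mono)
      fix l assume l: "l \<in> {..<length xs}"
      have a: "xs ! l < n" using inn l by simp
      have b: "xs ! ((l + 1) mod length xs) < n" using inn xs(2) by simp
      show "0 \<le> A (xs ! l) (xs ! ((l + 1) mod length xs)) \<and>
            A (xs ! l) (xs ! ((l + 1) mod length xs)) \<le> amax"
        using Ac a b nn cle n0 by simp
    qed
    then have "cycle_weight A xs \<le> amax ^ length xs" by simp
    then have "root (length xs) (cycle_weight A xs) \<le> root (length xs) (amax ^ length xs)"
      using xs(2) by (simp add: real_root_le_iff)
    also have "\<dots> = amax" using amax0 xs(2) real_root_power_cancel[of "length xs" amax] by simp
    finally show ?thesis using xs(1) by simp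
  qed
  have ne: "S \<noteq> {}" using inS[OF n0] by blast
  have "Max S \<le> amax" using fin ne Sle by simp
  moreover have "amax \<le> Max S"
  proof -
    have "amax \<in> c ` {..<n}" unfolding amax_def using n0 by (intro Max_in) auto
    then obtain s where "s < n" "amax = c s" by auto
    then show ?thesis using inS fin by simp
  qed
  ultimately show ?thesis unfolding amax_def mcgm_def S_def by simp
qed



theorem lemma5:
  fixes n :: nat and A :: "nat \<Rightarrow> nat \<Rightarrow> real"
  assumes "nonneg_mat n A"
    and "circulant n A"
    and "\<exists>i<n. \<exists>j<n. A i j \<noteq> 0"
  defines "M \<equiv> mp_pow n (\<lambda>i j. A i j / mcgm n A) (n ^ 2)"
  shows "(\<forall>i<n. \<forall>j<n. mp_mult n M M i j = M i j)
       \<and> (\<forall>i<n. M i i = 1)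
       \<and> (\<forall>i<n. \<forall>j<n. mp_star n M i j = M i j)"
proof -
  obtain i0 j0 where ij0: "i0 < n" "j0 < n" "A i0 j0 \<noteq> 0" using assms(3) by blast
  have n0: "0 < n" using ij0 by simp
  obtain a where a: "\<forall>i<n. \<forall>j<n. A i j = a ((j + n - i) mod n)"
    using assms(2) unfolding circulant_def by blast
  define c where "c t = A 0 t" for t
  have Ac: "\<forall>x<n. \<forall>y<n. A x y = c ((y + n - x) mod n)"
    using a n0 by (simp add: c_def)
  have cnn: "\<forall>t<n. 0 \<le> c t" using assms(1) n0 by (simp add: c_def nonneg_mat_def)
  define L where "L = mcgm n A"
  have L: "L = Max (c ` {..<n})" unfolding L_def by (rule lam[OF n0 cnn Ac])
  have cle: "c t \<le> L" if "t < n" for t using that unfolding L by (intro Max_ge) auto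
  have "L \<in> c ` {..<n}" unfolding L using n0 by (intro Max_in) auto
  then obtain s where s: "s < n" "c s = L" by auto
  have "0 < L"
  proof -
    have "A i0 j0 = c ((j0 + n - i0) mod n)" using Ac ij0 by simp
    moreover have "0 \<le> A i0 j0" using assms(1) ij0 by (simp add: nonneg_mat_def)
    ultimately have "0 < c ((j0 + n - i0) mod n)" using ij0 by simp
    moreover have "c ((j0 + n - i0) mod n) \<le> L" using n0 by (intro cle) simp
    ultimately show ?thesis by simp
  qed
  define b where "b t = c t / L" for t
  define B where "B i j = A i j / mcgm n A" for i j
  have hB: "\<forall>i<n. \<forall>k<n. B i k = b ((k + n - i) mod n)"
    using Ac by (simp add: B_def b_def L_def)
  have bb: "\<forall>t<n. 0 \<le> b t \<and> b t \<le> 1"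
    using cnn cle \<open>0 < L\<close> by (simp add: b_def)
  have bnn: "\<forall>t<n. 0 \<le> b t" using bb by simp
  have bs: "b s = 1" using s \<open>0 < L\<close> by (simp add: b_def)
  have Bnn: "\<forall>i<n. \<forall>k<n. 0 \<le> B i k" using hB bb by simp
  have MB: "M = mp_pow n B (n^2)" unfolding M_def B_def by simp
  have Mnn: "0 \<le> M i j" if "i < n" "j < n" for i j
    unfolding MB using pow_nonneg[OF n0 Bnn that] .
  have Mle1: "M i j \<le> 1" if "i < n" "j < n" for i j
    using pow_upper[OF n0 hB that, of "n^2"] wprod_bounds[OF bb] unfolding MB valid_def by auto
  have Mdiag: "M i i = 1" if "i < n" for i
  proof -
    have "valid n (n^2) i i (replicate (n^2) s)"
      using s that by (simp add: valid_def sum_list_replicate power2_eq_square mult.assoc)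
    from pow_lower[OF n0 hB bnn that this]
    have "wprod b (replicate (n^2) s) \<le> M i i" unfolding MB by simp
    then have "1 \<le> M i i" by (simp add: wprod_def bs)
    with Mle1[OF that that] show ?thesis by simp
  qed
  have Mcomp: "M i k * M k j \<le> M i j" if "i < n" "k < n" "j < n" for i k j
  proof -
    have u1: "M i k = 0 \<or> (\<exists>ts. valid n (n^2) i k ts \<and> M i k = wprod b ts)"
      unfolding MB using pow_upper[OF n0 hB that(1,2)] .
    have u2: "M k j = 0 \<or> (\<exists>ts. valid n (n^2) k j ts \<and> M k j = wprod b ts)"
      unfolding MB using pow_upper[OF n0 hB that(2,3)] .
    show ?thesis
    proof (cases "M i k = 0 \<or> M k j = 0")
      case True then show ?thesis using Mnn that by auto
    next
      case False
      then obtain ts1 ts2 where t1: "valid n (n^2) i k ts1" "M i k = wprod b ts1"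
        and t2: "valid n (n^2) k j ts2" "M k j = wprod b ts2" using u1 u2 by blast
      define xs where "xs = ts1 @ ts2"
      have sx: "set xs \<subseteq> {..<n}" using t1 t2 by (simp add: xs_def valid_def)
      have lx: "length xs mod n = 0" using t1 t2
        by (simp add: xs_def valid_def power2_eq_square)
      obtain ys where ys: "set ys \<subseteq> {..<n}" "length ys = n^2"
        "sum_list ys mod n = sum_list xs mod n" "wprod b xs \<le> wprod b ys"
        using reduceN[OF n0 bb s(1) bs sx lx] by blast
      have "(i + sum_list ys) mod n = (i + sum_list xs) mod n"
        using ys(3) by (metis mod_add_right_eq)
      also have "\<dots> = ((i + sum_list ts1) + sum_list ts2) mod n" by (simp add: xs_def add.assoc)
      also have "\<dots> = ((i + sum_list ts1) mod n + sum_list ts2) mod n" by (simp add: mod_add_left_eq)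
      also have "\<dots> = j" using t1 t2 by (simp add: valid_def)
      finally have "valid n (n^2) i j ys" using ys by (simp add: valid_def)
      from pow_lower[OF n0 hB bnn that(1) this] have "wprod b ys \<le> M i j" unfolding MB .
      moreover have "M i k * M k j = wprod b xs" using t1 t2 by (simp add: xs_def wprod_append)
      ultimately show ?thesis using ys(4) by simp
    qed
  qed
  have idem: "mp_mult n M M i j = M i j" if "i < n" "j < n" for i j
  proof (rule antisym)
    show "mp_mult n M M i j \<le> M i j"
      unfolding mp_mult_def using n0 Mcomp that by (intro Max.boundedI) auto
    have "M i j * M j j \<le> mp_mult n M M i j"
      unfolding mp_mult_def using that by (intro Max_ge) auto
    then show "M i j \<le> mp_mult n M M i j" using Mdiag that by simp
  qed
  have powle: "mp_pow n M t i j \<le> M i j" if "i < n" "j < n" for t i j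
    using that
  proof (induction t arbitrary: i j)
    case 0 then show ?case using Mdiag Mnn by (auto simp: mp_id_def)
  next
    case (Suc t)
    have "M i k * mp_pow n M t k j \<le> M i j" if "k < n" for k
    proof -
      have "M i k * mp_pow n M t k j \<le> M i k * M k j"
        using Suc that Mnn by (intro mult_left_mono) auto
      also have "\<dots> \<le> M i j" using Mcomp Suc.prems that by blast
      finally show ?thesis .
    qed
    then show ?case unfolding mp_pow.simps mp_mult_def using n0 by (intro Max.boundedI) auto
  qed
  have star: "mp_star n M i j = M i j" if "i < n" "j < n" for i j
  proof (rule antisym)
    show "mp_star n M i j \<le> M i j"
      unfolding mp_star_def using n0 powle that by (intro Max.boundedI) auto
    show "M i j \<le> mp_star n M i j"
    proof (cases "i = j")
      case True
      have "mp_pow n M 0 i j \<in> (\<lambda>t. mp_pow n M t i j) ` {..<n}" using n0 by blast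
      then have "mp_pow n M 0 i j \<le> mp_star n M i j"
        unfolding mp_star_def by (intro Max_ge) auto
      then show ?thesis using True Mdiag that by (simp add: mp_id_def)
    next
      case False
      then have n1: "1 < n" using that by linarith
      have "M i j * mp_id j j \<le> mp_pow n M (Suc 0) i j"
        unfolding mp_pow.simps mp_mult_def using that by (intro Max_ge) auto
      also have "\<dots> \<le> mp_star n M i j"
      proof -
        have "mp_pow n M (Suc 0) i j \<in> (\<lambda>t. mp_pow n M t i j) ` {..<n}" using n1 by (intro image_eqI[of _ _ "Suc 0"]) auto
        then show ?thesis unfolding mp_star_def by (intro Max_ge) auto
      qed
      finally show ?thesis by (simp add: mp_id_def)
    qed
  qed
  show ?thesis using idem Mdiag star by blast
qed


end
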